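(* Let $R$ be an integral domain such that every finitely generated ideal of $R$ is a multiplication ideal. Then $R$ is an avoidance ring.
   Context: All rings are commutative with $1\neq 0$. An ideal $I$ of $R$ is a multiplication ideal if every ideal of $R$ contained in $I$ is of the form $IJ$ for some ideal $J$ of $R$. An ideal $I$ has avoidance if whenever $I_1,\ldots,I_n$ are finitely many ideals of $R$ with $I\subseteq\bigcup_{k=1}^n I_k$, then $I\subseteq I_k$ for some $k$. A ring is an avoidance ring if every ideal of it has avoidance. *)

theory Defs
  imports "HOL-Algebra.Ideal_Product"
begin

definition finitely_generated_ideal :: "('a, 'b) ring_scheme \<Rightarrow> 'a set \<Rightarrow> bool" where
  "finitely_generated_ideal R I \<longleftrightarrow>
     (\<exists>S. finite S \<and> S \<subseteq> carrier R \<and> I = genideal R S)"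

definition multiplication_ideal :: "('a, 'b) ring_scheme \<Rightarrow> 'a set \<Rightarrow> bool" where
  "multiplication_ideal R I \<longleftrightarrow>
     ideal I R \<and> (\<forall>J. ideal J R \<and> J \<subseteq> I \<longrightarrow> (\<exists>K. ideal K R \<and> J = ideal_prod R I K))"

definition has_avoidance :: "('a, 'b) ring_scheme \<Rightarrow> 'a set \<Rightarrow> bool" where
  "has_avoidance R I \<longleftrightarrow>
     (\<forall>(n::nat) (Is :: nat \<Rightarrow> 'a set).
        (\<forall>k<n. ideal (Is k) R) \<and> I \<subseteq> (\<Union>k<n. Is k) \<longrightarrow> (\<exists>k<n. I \<subseteq> Is k))"

definition avoidance_ring :: "('a, 'b) ring_scheme \<Rightarrow> bool" where
  "avoidance_ring R \<longleftrightarrow> (\<forall>I. ideal I R \<longrightarrow> has_avoidance R I)"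

end

theory Submission
  imports Defs "HOL-Algebra.Ring_Divisibility"
begin

lemma (in ring) exists_maximal:
  assumes K: "ideal K R" and Kn: "K \<noteq> carrier R"
  shows "\<exists>M. maximalideal M R \<and> K \<subseteq> M"
proof -
  define A where "A = {L. ideal L R \<and> K \<subseteq> L \<and> \<one> \<notin> L}"
  have oneK: "\<one> \<notin> K" using K Kn ideal.one_imp_carrier by blast
  have "\<exists>M\<in>A. \<forall>X\<in>A. M \<subseteq> X \<longrightarrow> X = M"
  proof (rule subset_Zorn)
    fix C assume C: "subset.chain A C"
    show "\<exists>U\<in>A. \<forall>X\<in>C. X \<subseteq> U"
    proof (cases "C = {}")
      case True thus ?thesis using K oneK A_def by auto
    next
      case False
      have "subset.chain {I. ideal I R} C" using C unfolding pred_on.chain_def A_def by auto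
      from chain_Union_is_ideal[OF this] False have "ideal (\<Union>C) R" by simp
      moreover have "K \<subseteq> \<Union>C" using False C unfolding pred_on.chain_def A_def by blast
      moreover have "\<one> \<notin> \<Union>C" using C unfolding pred_on.chain_def A_def by auto
      ultimately show ?thesis unfolding A_def by auto
    qed
  qed
  then obtain M where M: "M \<in> A" "\<And>X. X \<in> A \<Longrightarrow> M \<subseteq> X \<Longrightarrow> X = M" by blast
  have "maximalideal M R"
  proof (rule maximalidealI)
    show "ideal M R" using M A_def by auto
    show "carrier R \<noteq> M" using M A_def by auto
    fix J assume J: "ideal J R" "M \<subseteq> J" "J \<subseteq> carrier R"
    show "J = M \<or> J = carrier R"
    proof (cases "\<one> \<in> J")
      case True thus ?thesis using J ideal.one_imp_carrier by blast
    next
      case False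
      hence "J \<in> A" using J M A_def by auto
      thus ?thesis using J M(2) by blast
    qed
  qed
  thus ?thesis using M A_def by auto
qed

lemma ideal_prod_mono1:
  assumes "I \<subseteq> I'" shows "ideal_prod R I J \<subseteq> ideal_prod R I' J"
proof
  fix x assume "x \<in> ideal_prod R I J" thus "x \<in> ideal_prod R I' J"
    by (induct x rule: ideal_prod.induct) (auto intro: ideal_prod.intros assms[THEN subsetD])
qed

lemma set_add_mem:
  fixes R (structure)
  shows "a \<in> I \<Longrightarrow> b \<in> J \<Longrightarrow> a \<oplus> b \<in> I <+> J"
  unfolding set_add_def' by blast

lemma set_add_memE:
  fixes R (structure)
  shows "x \<in> I <+> J \<Longrightarrow> \<exists>a\<in>I. \<exists>b\<in>J. x = a \<oplus> b"
  unfolding set_add_def' by blast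

lemma (in cring) canc: "a \<in> carrier R \<Longrightarrow> b \<in> carrier R \<Longrightarrow> (a \<oplus> b) \<ominus> b = a"
  by (metis a_assoc a_inv_closed minus_eq r_neg r_zero)

lemma (in cring) comax:
  assumes M: "maximalideal M R" and M': "maximalideal M' R" and ne: "M \<noteq> M'"
  shows "\<exists>u\<in>M. \<one> \<ominus> u \<in> M'"
proof -
  have iM: "ideal M R" and iM': "ideal M' R" using M M' maximalideal.axioms(1) by blast+
  have L: "ideal (M <+>\<^bsub>R\<^esub> M') R" using add_ideals[OF iM iM'] .
  have z: "\<zero> \<in> M" "\<zero> \<in> M'" using iM iM' additive_subgroup.zero_closed ideal.axioms(1) by blast+
  have sub1: "M \<subseteq> M <+>\<^bsub>R\<^esub> M'"
  proof
    fix x assume x: "x \<in> M"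
    have "x \<oplus> \<zero> \<in> M <+>\<^bsub>R\<^esub> M'" using set_add_mem[OF x z(2)] .
    moreover have "x \<oplus> \<zero> = x" using x ideal.Icarr[OF iM] r_zero by blast
    ultimately show "x \<in> M <+>\<^bsub>R\<^esub> M'" by simp
  qed
  have sub2: "M' \<subseteq> M <+>\<^bsub>R\<^esub> M'"
  proof
    fix x assume x: "x \<in> M'"
    have "\<zero> \<oplus> x \<in> M <+>\<^bsub>R\<^esub> M'" using set_add_mem[OF z(1) x] .
    moreover have "\<zero> \<oplus> x = x" using x ideal.Icarr[OF iM'] l_zero by blast
    ultimately show "x \<in> M <+>\<^bsub>R\<^esub> M'" by simp
  qed
  have carr: "M <+>\<^bsub>R\<^esub> M' \<subseteq> carrier R" using ideal.Icarr[OF L] by blast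
  have "M <+>\<^bsub>R\<^esub> M' = carrier R"
  proof (rule ccontr)
    assume a: "M <+>\<^bsub>R\<^esub> M' \<noteq> carrier R"
    have "M <+>\<^bsub>R\<^esub> M' = M \<or> M <+>\<^bsub>R\<^esub> M' = carrier R"
      using maximalideal.I_maximal[OF M L sub1 carr] .
    hence "M <+>\<^bsub>R\<^esub> M' = M" using a by blast
    hence "M' \<subseteq> M" using sub2 by blast
    moreover have "M \<subseteq> carrier R" using ideal.Icarr[OF iM] by blast
    ultimately have "M = M' \<or> M = carrier R" using maximalideal.I_maximal[OF M' iM] by blast
    thus False using ne maximalideal.I_notcarr[OF M] by blast
  qed
  hence "\<one> \<in> M <+>\<^bsub>R\<^esub> M'" by simp
  then obtain u v where uv: "u \<in> M" "v \<in> M'" "\<one> = u \<oplus> v"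
    using set_add_memE[where R=R and x="\<one>" and I=M and J=M'] by blast
  have uc: "u \<in> carrier R" and vc: "v \<in> carrier R" using ideal.Icarr[OF iM uv(1)] ideal.Icarr[OF iM' uv(2)] by blast+
  have "(u \<oplus> v) \<ominus> u = v" using canc[OF vc uc] a_comm[OF uc vc] by simp
  hence "\<one> \<ominus> u = v" using uv(3) by simp
  thus ?thesis using uv by blast
qed


lemma ideal_prod_mono2:
  assumes "J \<subseteq> J'" shows "ideal_prod R I J \<subseteq> ideal_prod R I J'"
proof
  fix x assume "x \<in> ideal_prod R I J" thus "x \<in> ideal_prod R I J'"
    by (induct x rule: ideal_prod.induct) (auto intro: ideal_prod.intros assms[THEN subsetD])
qed

lemma (in ring) ideal_add_mem: "ideal I R \<Longrightarrow> a \<in> I \<Longrightarrow> b \<in> I \<Longrightarrow> a \<oplus> b \<in> I"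
  by (meson additive_subgroup.a_closed ideal.axioms(1))

lemma (in ring) ideal_minus_mem: "ideal I R \<Longrightarrow> a \<in> I \<Longrightarrow> b \<in> I \<Longrightarrow> a \<ominus> b \<in> I"
  by (metis additive_subgroup.a_closed additive_subgroup.a_inv_closed ideal.axioms(1) ideal.Icarr minus_eq)

lemma (in cring) t3: "x \<in> carrier R \<Longrightarrow> y \<in> carrier R \<Longrightarrow> e \<in> carrier R \<Longrightarrow> x \<oplus> (y \<ominus> x) \<otimes> e = y \<oplus> (x \<ominus> y) \<otimes> (\<one> \<ominus> e)" by algebra
lemma (in cring) t4: "e \<in> carrier R \<Longrightarrow> \<one> \<ominus> e \<otimes> (\<one> \<ominus> u) = (\<one> \<ominus> e) \<oplus> e \<otimes> u" if "u \<in> carrier R"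
  using that by algebra

lemma (in cring) e_exists:
  fixes n :: nat
  assumes M: "maximalideal M R"
  shows "(\<forall>k<n. maximalideal (Ms k) R \<and> Ms k \<noteq> M) \<Longrightarrow>
     \<exists>e\<in>carrier R. (\<forall>k<n. e \<in> Ms k) \<and> \<one> \<ominus> e \<in> M"
proof (induction n)
  case 0
  have "\<one> \<ominus> \<one> = \<zero>" by (simp add: minus_eq r_neg)
  moreover have "\<zero> \<in> M" using M maximalideal.axioms(1) additive_subgroup.zero_closed ideal.axioms(1) by blast
  ultimately have "\<one> \<ominus> \<one> \<in> M" by metis
  thus ?case using one_closed by blast
next
  case (Suc n)
  then obtain e where e: "e \<in> carrier R" "\<forall>k<n. e \<in> Ms k" "\<one> \<ominus> e \<in> M" by auto
  have Mn: "maximalideal (Ms n) R" "Ms n \<noteq> M" using Suc.prems by auto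
  obtain u where u: "u \<in> M" "\<one> \<ominus> u \<in> Ms n" using comax[OF M Mn(1)] Mn(2) by metis
  have iM: "ideal M R" using M maximalideal.axioms(1) by blast
  have uc: "u \<in> carrier R" using ideal.Icarr[OF iM u(1)] .
  define e' where "e' = e \<otimes> (\<one> \<ominus> u)"
  have e'c: "e' \<in> carrier R" using e uc e'_def by simp
  have "\<forall>k<Suc n. e' \<in> Ms k"
  proof (intro allI impI)
    fix k assume k: "k < Suc n"
    have ik: "ideal (Ms k) R" using Suc.prems k maximalideal.axioms(1) by blast
    show "e' \<in> Ms k"
    proof (cases "k = n")
      case True thus ?thesis using ideal.I_l_closed[OF ik] u(2) e(1) e'_def by simp
    next
      case False hence "k < n" using k by simp
      thus ?thesis using ideal.I_r_closed[OF ik] e(2) uc e'_def by simp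
    qed
  qed
  moreover have "\<one> \<ominus> e' \<in> M"
  proof -
    have "\<one> \<ominus> e' = (\<one> \<ominus> e) \<oplus> e \<otimes> u" unfolding e'_def using t4[OF uc e(1)] .
    moreover have "e \<otimes> u \<in> M" using ideal.I_l_closed[OF iM u(1) e(1)] .
    ultimately show ?thesis using ideal_add_mem[OF iM e(3)] by simp
  qed
  ultimately show ?case using e'c by blast
qed

lemma (in cring) G_lemma:
  fixes n :: nat
  assumes J: "ideal J R"
  shows "(\<forall>k<n. maximalideal (Ms k) R) \<Longrightarrow> (\<forall>k<n. \<exists>y\<in>J. y \<notin> ideal_prod R J (Ms k)) \<Longrightarrow>
     \<exists>x\<in>J. \<forall>k<n. x \<notin> ideal_prod R J (Ms k)"
proof (induction n)
  case 0
  have "\<zero> \<in> J" using J additive_subgroup.zero_closed ideal.axioms(1) by blast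
  thus ?case by auto
next
  case (Suc n)
  then obtain x where x: "x \<in> J" "\<forall>k<n. x \<notin> ideal_prod R J (Ms k)" by auto
  show ?case
  proof (cases "\<exists>k<n. Ms n = Ms k")
    case True
    then obtain k0 where "k0 < n" "Ms n = Ms k0" by blast
    hence "\<forall>k<Suc n. x \<notin> ideal_prod R J (Ms k)" using x(2) less_Suc_eq by auto
    thus ?thesis using x(1) by blast
  next
    case False
    have Mn: "maximalideal (Ms n) R" using Suc.prems by auto
    have "\<forall>k<n. maximalideal (Ms k) R \<and> Ms k \<noteq> Ms n" using Suc.prems False by auto
    then obtain e where e: "e \<in> carrier R" "\<forall>k<n. e \<in> Ms k" "\<one> \<ominus> e \<in> Ms n"
      using e_exists[OF Mn] by blast
    obtain y where y: "y \<in> J" "y \<notin> ideal_prod R J (Ms n)" using Suc.prems by auto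
    have xc: "x \<in> carrier R" and yc: "y \<in> carrier R" using ideal.Icarr[OF J] x(1) y(1) by auto
    define x' where "x' = x \<oplus> (y \<ominus> x) \<otimes> e"
    have yx: "y \<ominus> x \<in> J" using ideal_minus_mem[OF J y(1) x(1)] .
    have xy: "x \<ominus> y \<in> J" using ideal_minus_mem[OF J x(1) y(1)] .
    have x'J: "x' \<in> J" unfolding x'_def using ideal_add_mem[OF J x(1) ideal.I_r_closed[OF J yx e(1)]] .
    have "\<forall>k<Suc n. x' \<notin> ideal_prod R J (Ms k)"
    proof (intro allI impI notI)
      fix k assume k: "k < Suc n" and mem: "x' \<in> ideal_prod R J (Ms k)"
      have ik: "ideal (Ms k) R" using Suc.prems k maximalideal.axioms(1) by blast
      have iP: "ideal (ideal_prod R J (Ms k)) R" using ideal_prod_is_ideal[OF J ik] .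
      show False
      proof (cases "k = n")
        case True
        have "(x \<ominus> y) \<otimes> (\<one> \<ominus> e) \<in> ideal_prod R J (Ms k)"
          using ideal_prod.prod[OF xy, of "\<one> \<ominus> e" "Ms k" R] e(3) True by simp
        hence "x' \<ominus> (x \<ominus> y) \<otimes> (\<one> \<ominus> e) \<in> ideal_prod R J (Ms k)"
          using ideal_minus_mem[OF iP mem] by blast
        moreover have "x' \<ominus> (x \<ominus> y) \<otimes> (\<one> \<ominus> e) = y" unfolding x'_def t3[OF xc yc e(1)]
          using canc xc yc e(1) by simp
        ultimately show False using y(2) True by simp
      next
        case False hence kn: "k < n" using k by simp
        have "(y \<ominus> x) \<otimes> e \<in> ideal_prod R J (Ms k)"
          using ideal_prod.prod[OF yx, of e "Ms k" R] e(2) kn by simp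
        hence "x' \<ominus> (y \<ominus> x) \<otimes> e \<in> ideal_prod R J (Ms k)"
          using ideal_minus_mem[OF iP mem] by blast
        moreover have "x' \<ominus> (y \<ominus> x) \<otimes> e = x" unfolding x'_def using canc xc yc e(1) by simp
        ultimately show False using x(2) kn by simp
      qed
    qed
    thus ?thesis using x'J by blast
  qed
qed

lemma (in cring) PIdl_prod:
  assumes a: "a \<in> carrier R" and M: "ideal M R"
  shows "x \<in> ideal_prod R (PIdl a) M \<Longrightarrow> \<exists>m\<in>M. x = a \<otimes> m"
proof (induct x rule: ideal_prod.induct)
  case (prod i j)
  then obtain r where r: "r \<in> carrier R" "i = r \<otimes> a" unfolding cgenideal_def by blast
  have jc: "j \<in> carrier R" using ideal.Icarr[OF M prod(2)] .
  have "i \<otimes> j = a \<otimes> (r \<otimes> j)" using r a jc by (simp add: m_ac)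
  moreover have "r \<otimes> j \<in> M" using ideal.I_l_closed[OF M prod(2) r(1)] .
  ultimately show ?case by blast
next
  case (sum s1 s2)
  then obtain m1 m2 where m: "m1 \<in> M" "m2 \<in> M" "s1 = a \<otimes> m1" "s2 = a \<otimes> m2" by blast
  have "s1 \<oplus> s2 = a \<otimes> (m1 \<oplus> m2)" using m a ideal.Icarr[OF M] by (simp add: r_distr)
  moreover have "m1 \<oplus> m2 \<in> M" using ideal_add_mem[OF M m(1,2)] .
  ultimately show ?case by blast
qed

lemma (in domain) F3:
  assumes J: "ideal J R" and mJ: "multiplication_ideal R J" and a: "a \<in> J" "a \<noteq> \<zero>"
    and M: "ideal M R" and M1: "\<one> \<notin> M"
  shows "\<exists>y\<in>J. y \<notin> ideal_prod R J M"
proof (rule ccontr)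
  assume "\<not> ?thesis"
  hence JM: "J \<subseteq> ideal_prod R J M" by blast
  have ac: "a \<in> carrier R" using ideal.Icarr[OF J a(1)] .
  have P: "ideal (PIdl a) R" using cgenideal_ideal[OF ac] .
  have PJ: "PIdl a \<subseteq> J" using cgenideal_minimal[OF J a(1)] .
  obtain L where L: "ideal L R" "PIdl a = ideal_prod R J L"
    using mJ P PJ unfolding multiplication_ideal_def by blast
  have "PIdl a \<subseteq> ideal_prod R (ideal_prod R J M) L" using L(2) ideal_prod_mono1[OF JM] by simp
  also have "\<dots> = ideal_prod R J (ideal_prod R M L)" using ideal_prod_assoc[OF J M L(1)] .
  also have "\<dots> = ideal_prod R J (ideal_prod R L M)" using ideal_prod_commute[OF M L(1)] by simp
  also have "\<dots> = ideal_prod R (ideal_prod R J L) M" using ideal_prod_assoc[OF J L(1) M] by simp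
  also have "\<dots> = ideal_prod R (PIdl a) M" using L(2) by simp
  finally have "a \<in> ideal_prod R (PIdl a) M" using cgenideal_self[OF ac] by blast
  then obtain m where m: "m \<in> M" "a = a \<otimes> m" using PIdl_prod[OF ac M] by blast
  have mc: "m \<in> carrier R" using ideal.Icarr[OF M m(1)] .
  have "a \<otimes> \<one> = a \<otimes> m" using m(2) ac by simp
  hence "\<one> = m" using m_lcancel[OF a(2) ac one_closed mc] by simp
  thus False using m(1) M1 by simp
qed

lemma (in domain) main:
  assumes "\<forall>I. ideal I R \<and> finitely_generated_ideal R I \<longrightarrow> multiplication_ideal R I"
  shows "avoidance_ring R"
proof -
  show ?thesis unfolding avoidance_ring_def has_avoidance_def
  proof (intro allI impI)
    fix I n and Is :: "nat \<Rightarrow> 'a set"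
    assume I: "ideal I R" and H: "(\<forall>k<n. ideal (Is k) R) \<and> I \<subseteq> (\<Union>k<n. Is k)"
    have Is: "\<And>k. k < n \<Longrightarrow> ideal (Is k) R" and cov: "I \<subseteq> (\<Union>k<n. Is k)" using H by auto
    show "\<exists>k<n. I \<subseteq> Is k"
    proof (rule ccontr)
      assume "\<not> (\<exists>k<n. I \<subseteq> Is k)"
      hence "\<forall>k. \<exists>x. k < n \<longrightarrow> x \<in> I \<and> x \<notin> Is k" by blast
      then obtain f where f: "\<And>k. k < n \<Longrightarrow> f k \<in> I \<and> f k \<notin> Is k" by metis
      define S where "S = f ` {..<n}"
      have SI: "S \<subseteq> I" using f S_def by auto
      have Sc: "S \<subseteq> carrier R" using SI ideal.Icarr[OF I] by blast
      define J where "J = Idl S"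
      have J: "ideal J R" using genideal_ideal[OF Sc] J_def by simp
      have JI: "J \<subseteq> I" using genideal_minimal[OF I SI] J_def by simp
      have SJ: "S \<subseteq> J" using genideal_self[OF Sc] J_def by simp
      have fJ: "\<And>k. k < n \<Longrightarrow> f k \<in> J" using SJ S_def by auto
      have "finitely_generated_ideal R J" unfolding finitely_generated_ideal_def J_def
        using Sc S_def by auto
      hence mJ: "multiplication_ideal R J" using assms J by blast
      have "\<forall>k. \<exists>K. k < n \<longrightarrow> ideal K R \<and> J \<inter> Is k = ideal_prod R J K"
      proof
        fix k show "\<exists>K. k < n \<longrightarrow> ideal K R \<and> J \<inter> Is k = ideal_prod R J K"
        proof (cases "k < n")
          case True
          have "ideal (J \<inter> Is k) R" using i_intersect[OF J Is[OF True]] .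
          thus ?thesis using mJ unfolding multiplication_ideal_def by blast
        qed auto
      qed
      then obtain Ks where Ks: "\<And>k. k < n \<Longrightarrow> ideal (Ks k) R \<and> J \<inter> Is k = ideal_prod R J (Ks k)"
        by metis
      have Ksn: "\<And>k. k < n \<Longrightarrow> Ks k \<noteq> carrier R"
      proof
        fix k assume k: "k < n" and "Ks k = carrier R"
        hence "J \<inter> Is k = J" using Ks[OF k] ideal_prod_one[OF J] by simp
        thus False using f[OF k] fJ[OF k] by blast
      qed
      have "\<forall>k. \<exists>M. k < n \<longrightarrow> maximalideal M R \<and> Ks k \<subseteq> M"
      proof
        fix k show "\<exists>M. k < n \<longrightarrow> maximalideal M R \<and> Ks k \<subseteq> M"
        proof (cases "k < n")
          case True
          have "ideal (Ks k) R" using Ks[OF True] by blast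
          thus ?thesis using exists_maximal[OF _ Ksn[OF True]] by blast
        qed auto
      qed
      then obtain Ms where Ms: "\<And>k. k < n \<Longrightarrow> maximalideal (Ms k) R \<and> Ks k \<subseteq> Ms k" by metis
      have Y: "\<forall>k<n. \<exists>y\<in>J. y \<notin> ideal_prod R J (Ms k)"
      proof (intro allI impI)
        fix k assume k: "k < n"
        hence n0: "0 < n" by simp
        have "\<zero> \<in> Is 0" using Is[OF n0] additive_subgroup.zero_closed ideal.axioms(1) by blast
        hence f0: "f 0 \<noteq> \<zero>" using f[OF n0] by auto
        have iM: "ideal (Ms k) R" using Ms[OF k] maximalideal.axioms(1) by blast
        have "\<one> \<notin> Ms k" using Ms[OF k] maximalideal.I_notcarr ideal.one_imp_carrier[OF iM] by metis
        thus "\<exists>y\<in>J. y \<notin> ideal_prod R J (Ms k)" using F3[OF J mJ fJ[OF n0] f0 iM] by blast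
      qed
      obtain x where x: "x \<in> J" "\<forall>k<n. x \<notin> ideal_prod R J (Ms k)"
        using G_lemma[OF J, of n Ms] Ms Y by blast
      obtain k where k: "k < n" "x \<in> Is k" using x(1) JI cov by blast
      have "x \<in> ideal_prod R J (Ks k)" using Ks[OF k(1)] x(1) k(2) by blast
      hence "x \<in> ideal_prod R J (Ms k)" using ideal_prod_mono2[of "Ks k" "Ms k"] Ms[OF k(1)] by blast
      thus False using x(2) k(1) by blast
    qed
  qed
qed

theorem corollary3p14:
  fixes R :: "('a, 'b) ring_scheme"
  assumes "domain R"
    and "\<forall>I. ideal I R \<and> finitely_generated_ideal R I \<longrightarrow> multiplication_ideal R I"
  shows "avoidance_ring R"
  using domain.main[OF assms] .

end
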